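(* Let $g=(U,v)\in\mathrm{Aff}(n,\mathbb{C})$ where $U\in\mathrm{GL}(n,\mathbb{C})$ is unipotent (all eigenvalues equal to $1$) and $v\in\mathbb{C}^n$ is arbitrary. Then $g$ is strongly $c$-reversible; in particular $g$ is a product of two coninvolutions in $\mathrm{Aff}(n,\mathbb{C})$.
   Context: $\mathrm{Aff}(n,\mathbb{C})$ is the group of affine maps $z\mapsto Az+v$, written $(A,v)$, with product $(A,v)(B,w)=(AB,Aw+v)$ and identity $e=(I_n,0)$. For $g=(A,v)$ set $\overline{g}=(\overline{A},\overline{v})$. An element $h$ is a coninvolution if $h\overline{h}=e$; $g$ is strongly $c$-reversible if there is a coninvolution $h$ with $hgh^{-1}=\overline{g}^{-1}$. *)

theory Defs
  imports "HOL-Analysis.Analysis"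
begin

text \<open>Affine group Aff(n,C): pairs (A,v) with A invertible, representing z |-> A z + v.
  The dimension n is the cardinality of the finite index type 'n.\<close>

type_synonym 'n aff = "(complex^'n^'n) \<times> (complex^'n)"

definition aff_group :: "'n::finite aff set" where
  "aff_group = {(A, v). invertible A}"

definition aff_mult :: "'n::finite aff \<Rightarrow> 'n aff \<Rightarrow> 'n aff" where
  "aff_mult g h = (case g of (A, v) \<Rightarrow> case h of (B, w) \<Rightarrow> (A ** B, A *v w + v))"

definition aff_id :: "'n::finite aff" where
  "aff_id = (mat 1, 0)"

definition aff_inv :: "'n::finite aff \<Rightarrow> 'n aff" where
  "aff_inv g = (case g of (A, v) \<Rightarrow> (matrix_inv A, - (matrix_inv A *v v)))"

definition aff_conj :: "'n::finite aff \<Rightarrow> 'n aff" where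
  "aff_conj g = (case g of (A, v) \<Rightarrow> ((\<chi> i j. cnj (A $ i $ j)), (\<chi> i. cnj (v $ i))))"

definition coninvolution :: "'n::finite aff \<Rightarrow> bool" where
  "coninvolution h \<longleftrightarrow> h \<in> aff_group \<and> aff_mult h (aff_conj h) = aff_id"

definition strongly_c_reversible :: "'n::finite aff \<Rightarrow> bool" where
  "strongly_c_reversible g \<longleftrightarrow>
     (\<exists>h. coninvolution h \<and>
          aff_mult (aff_mult h g) (aff_inv h) = aff_inv (aff_conj g))"

definition unipotent :: "complex^'n^'n \<Rightarrow> bool" where
  "unipotent A \<longleftrightarrow> (\<forall>c x. x \<noteq> 0 \<and> A *v x = c *s x \<longrightarrow> c = 1)"

end

theory Submission
  imports Defs Jordan_Normal_Form.Jordan_Normal_Form_Existence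
begin

lemma alt_choose_mult:
  fixes i j :: nat
  shows "(\<Sum>m\<le>j. (-1)^m * of_nat (j choose m) * of_nat (m choose i) :: 'a::comm_ring_1)
         = (if i = j then (-1)^j else 0)"
proof (cases "i \<le> j")
  case False
  then show ?thesis by (auto intro!: sum.neutral simp: binomial_eq_0)
next
  case True
  have "(\<Sum>m\<le>j. (-1)^m * of_nat (j choose m) * of_nat (m choose i) :: 'a)
      = (\<Sum>m\<in>{i..j}. (-1)^m * of_nat (j choose m) * of_nat (m choose i))"
    by (rule sum.mono_neutral_right) (auto simp: binomial_eq_0)
  also have "\<dots> = (\<Sum>l\<in>{0..j-i}. (-1)^(l+i) * of_nat (j choose (l+i)) * of_nat ((l+i) choose i))"
    using True sum.shift_bounds_cl_nat_ivl[of "\<lambda>m. (-1)^m * of_nat (j choose m) * of_nat (m choose i) :: 'a" 0 i "j-i"]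
    by simp
  also have "\<dots> = (\<Sum>l\<in>{0..j-i}. (-1)^i * of_nat (j choose i) * ((-1)^l * of_nat ((j-i) choose l)))"
  proof (rule sum.cong)
    fix l assume "l \<in> {0..j-i}"
    then have "(j choose (l+i)) * ((l+i) choose i) = (j choose i) * ((j - i) choose l)"
      using choose_mult[of i "l+i" j] True by simp
    then have "(of_nat (j choose (l+i)) * of_nat ((l+i) choose i) :: 'a) = of_nat (j choose i) * of_nat ((j - i) choose l)"
      by (metis of_nat_mult)
    then show "(-1)^(l+i) * of_nat (j choose (l+i)) * of_nat ((l+i) choose i) = (-1)^i * of_nat (j choose i) * ((-1)^l * of_nat ((j-i) choose l) :: 'a)"
      by (simp add: power_add algebra_simps)
  qed simp
  also have "\<dots> = (-1)^i * of_nat (j choose i) * (\<Sum>l\<le>j-i. (-1)^l * of_nat ((j-i) choose l))"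
    by (simp add: sum_distrib_left atLeast0AtMost)
  also have "\<dots> = (if i = j then (-1)^j else 0)"
  proof (cases "i = j")
    case True then show ?thesis by simp
  next
    case False
    then have "j - i > 0" using \<open>i \<le> j\<close> by simp
    then show ?thesis using False choose_alternating_sum[of "j-i", where 'a='a] by simp
  qed
  finally show ?thesis .
qed

lemma mat_mult_entry:
  assumes "A \<in> carrier_mat n k" "B \<in> carrier_mat k m" "i < n" "j < m"
  shows "(A * B) $$ (i,j) = (\<Sum>l<k. A $$ (i,l) * B $$ (l,j))"
  using assms by (auto simp: scalar_prod_def lessThan_atLeast0 intro!: sum.cong)

lemma mat_vec_entry:
  assumes "A \<in> carrier_mat n k" "x \<in> carrier_vec k" "i < n"
  shows "(A *\<^sub>v x) $ i = (\<Sum>l<k. A $$ (i,l) * x $ l)"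
  using assms by (auto simp: scalar_prod_def lessThan_atLeast0 intro!: sum.cong)

abbreviation JB :: "nat \<Rightarrow> complex Matrix.mat" where "JB k \<equiv> jordan_block k 1"

lemma J_left:
  assumes "X \<in> carrier_mat k n" "i < k" "j < n"
  shows "(JB k * X) $$ (i,j) = X $$ (i,j) + (if Suc i < k then X $$ (Suc i, j) else 0)"
proof -
  have "(JB k * X) $$ (i,j) = (\<Sum>l<k. JB k $$ (i,l) * X $$ (l,j))"
    by (rule mat_mult_entry) (use assms in auto)
  also have "\<dots> = (\<Sum>l<k. (if l = i then X $$ (l,j) else 0) + (if l = Suc i then X $$ (l,j) else 0))"
    by (rule sum.cong) (use assms in auto)
  also have "\<dots> = X $$ (i,j) + (if Suc i < k then X $$ (Suc i, j) else 0)"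
    using assms by (simp add: sum.distrib sum.delta)
  finally show ?thesis .
qed

lemma J_right:
  assumes "X \<in> carrier_mat n k" "i < n" "j < k"
  shows "(X * JB k) $$ (i,j) = X $$ (i,j) + (if 0 < j then X $$ (i, j - 1) else 0)"
proof -
  have "(X * JB k) $$ (i,j) = (\<Sum>l<k. X $$ (i,l) * JB k $$ (l,j))"
    by (rule mat_mult_entry) (use assms in auto)
  also have "\<dots> = (\<Sum>l<k. (if l = j then X $$ (i,l) else 0) + (if Suc l = j then X $$ (i,l) else 0))"
    by (rule sum.cong) (use assms in auto)
  also have "\<dots> = X $$ (i,j) + (if 0 < j then X $$ (i, j - 1) else 0)"
  proof -
    have "(\<Sum>l<k. (if Suc l = j then X $$ (i,l) else 0)) = (\<Sum>l<k. (if l = j - 1 \<and> 0 < j then X $$ (i,l) else 0))"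
      by (rule sum.cong) auto
    then show ?thesis using assms by (simp add: sum.distrib sum.delta)
  qed
  finally show ?thesis .
qed

definition Bs :: "complex \<Rightarrow> nat \<Rightarrow> complex Matrix.mat" where
  "Bs s k = Matrix.mat k k (\<lambda>(i,j). s * (-1)^j * of_nat (j choose i))"

lemma Bs_carrier[simp]: "Bs s k \<in> carrier_mat k k"
  by (simp add: Bs_def)

lemma Bs_index[simp]: "i < k \<Longrightarrow> j < k \<Longrightarrow> Bs s k $$ (i,j) = s * (-1)^j * of_nat (j choose i)"
  by (simp add: Bs_def)

lemma Bs_dim[simp]: "dim_row (Bs s k) = k" "dim_col (Bs s k) = k"
  by (simp_all add: Bs_def)

lemma Bs_sq:
  assumes s: "s * s = 1"
  shows "Bs s k * Bs s k = 1\<^sub>m k"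
proof (rule eq_matI)
  fix i j assume ij: "i < dim_row (1\<^sub>m k)" "j < dim_col (1\<^sub>m k)"
  then have i: "i < k" and j: "j < k" by auto
  have "(Bs s k * Bs s k) $$ (i,j) = (\<Sum>l<k. Bs s k $$ (i,l) * Bs s k $$ (l,j))"
    by (rule mat_mult_entry) (use i j in auto)
  also have "\<dots> = (\<Sum>l<k. (s * s) * (-1)^j * ((-1)^l * of_nat (j choose l) * of_nat (l choose i)))"
    by (rule sum.cong) (use i j in \<open>auto simp: algebra_simps\<close>)
  also have "\<dots> = (s * s) * (-1)^j * (\<Sum>l<k. (-1)^l * of_nat (j choose l) * of_nat (l choose i))"
    by (simp add: sum_distrib_left)
  also have "(\<Sum>l<k. (-1)^l * of_nat (j choose l) * of_nat (l choose i)) = (\<Sum>l\<le>j. (-1)^l * of_nat (j choose l) * of_nat (l choose i) :: complex)"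
    by (rule sum.mono_neutral_right) (use j in \<open>auto simp: binomial_eq_0\<close>)
  also have "\<dots> = (if i = j then (-1)^j else 0)"
    by (rule alt_choose_mult)
  finally show "(Bs s k * Bs s k) $$ (i,j) = 1\<^sub>m k $$ (i,j)"
    using i j s by (auto simp flip: power_add simp: power_even_eq)
qed auto

lemma JBJ: "JB k * Bs s k * JB k = Bs s k"
proof (rule eq_matI)
  fix i j assume ij: "i < dim_row (Bs s k)" "j < dim_col (Bs s k)"
  then have i: "i < k" and j: "j < k" by auto
  have c: "JB k * Bs s k \<in> carrier_mat k k" by (rule mult_carrier_mat[of _ k k _ k]) auto
  have e1: "(JB k * Bs s k * JB k) $$ (i,j) = (JB k * Bs s k) $$ (i,j) + (if 0 < j then (JB k * Bs s k) $$ (i, j - 1) else 0)"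
    by (rule J_right[OF c i j])
  have e2: "\<And>j. j < k \<Longrightarrow> (JB k * Bs s k) $$ (i,j) = Bs s k $$ (i,j) + (if Suc i < k then Bs s k $$ (Suc i, j) else 0)"
    by (rule J_left) (use i in auto)
  show "(JB k * Bs s k * JB k) $$ (i,j) = Bs s k $$ (i,j)"
  proof (cases j)
    case 0
    have "(JB k * Bs s k) $$ (i,j) = Bs s k $$ (i,j) + (if Suc i < k then Bs s k $$ (Suc i, j) else 0)"
      by (rule e2[OF j])
    then have "(JB k * Bs s k) $$ (i,j) = Bs s k $$ (i,j)" using 0 i j by simp
    then show ?thesis using e1 0 by simp
  next
    case (Suc j')
    have p: "(Suc j' choose Suc i) = (j' choose i) + (j' choose Suc i)" by simp
    have a1: "(JB k * Bs s k) $$ (i,j) = Bs s k $$ (i,j) + (if Suc i < k then Bs s k $$ (Suc i, j) else 0)"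
      by (rule e2[OF j])
    have a2: "(JB k * Bs s k) $$ (i,j') = Bs s k $$ (i,j') + (if Suc i < k then Bs s k $$ (Suc i, j') else 0)"
      by (rule e2) (use j Suc in simp)
    have "(JB k * Bs s k * JB k) $$ (i,j) = (Bs s k $$ (i,j) + (if Suc i < k then Bs s k $$ (Suc i, j) else 0))
       + (Bs s k $$ (i,j') + (if Suc i < k then Bs s k $$ (Suc i, j') else 0))"
      using e1 a1 a2 Suc by simp
    also have "\<dots> = Bs s k $$ (i,j)"
    proof (cases "Suc i < k")
      case True
      then show ?thesis using i j Suc by (simp add: p algebra_simps)
    next
      case False
      then have "j' < i" using Suc j by simp
      then show ?thesis using i j Suc False by (simp add: binomial_eq_0)
    qed
    finally show ?thesis .
  qed
qed auto

lemma J_left_vec: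
  assumes "x \<in> carrier_vec k" "i < k"
  shows "(JB k *\<^sub>v x) $ i = x $ i + (if Suc i < k then x $ Suc i else 0)"
proof -
  have "(JB k *\<^sub>v x) $ i = (\<Sum>l<k. JB k $$ (i,l) * x $ l)"
    by (rule mat_vec_entry) (use assms in auto)
  also have "\<dots> = (\<Sum>l<k. (if l = i then x $ l else 0) + (if l = Suc i then x $ l else 0))"
    by (rule sum.cong) (use assms in auto)
  also have "\<dots> = x $ i + (if Suc i < k then x $ Suc i else 0)"
    using assms by (simp add: sum.distrib)
  finally show ?thesis .
qed

lemma cnj_mult_mat:
  assumes "A \<in> carrier_mat n k" "B \<in> carrier_mat k m"
  shows "map_mat cnj (A * B) = map_mat cnj A * map_mat cnj B"
proof (rule eq_matI)
  fix i j assume "i < dim_row (map_mat cnj A * map_mat cnj B)" "j < dim_col (map_mat cnj A * map_mat cnj B)"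
  then have i: "i < n" and j: "j < m" using assms by auto
  have "map_mat cnj (A * B) $$ (i,j) = cnj ((A * B) $$ (i,j))" using i j assms by simp
  also have "\<dots> = cnj (\<Sum>l<k. A $$ (i,l) * B $$ (l,j))" using mat_mult_entry[OF assms i j] by simp
  also have "\<dots> = (\<Sum>l<k. map_mat cnj A $$ (i,l) * map_mat cnj B $$ (l,j))"
    using i j assms by (simp add: cnj_sum)
  also have "\<dots> = (map_mat cnj A * map_mat cnj B) $$ (i,j)"
    by (rule mat_mult_entry[symmetric]) (use i j assms in auto)
  finally show "map_mat cnj (A * B) $$ (i,j) = (map_mat cnj A * map_mat cnj B) $$ (i,j)" .
qed (use assms in auto)

lemma cnj_mult_mat_vec:
  assumes "A \<in> carrier_mat n k" "x \<in> carrier_vec k"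
  shows "map_vec cnj (A *\<^sub>v x) = map_mat cnj A *\<^sub>v map_vec cnj x"
proof (rule eq_vecI)
  fix i assume "i < dim_vec (map_mat cnj A *\<^sub>v map_vec cnj x)"
  then have i: "i < n" using assms by auto
  have "map_vec cnj (A *\<^sub>v x) $ i = cnj ((A *\<^sub>v x) $ i)" using i assms by simp
  also have "\<dots> = cnj (\<Sum>l<k. A $$ (i,l) * x $ l)" using mat_vec_entry[OF assms i] by simp
  also have "\<dots> = (\<Sum>l<k. map_mat cnj A $$ (i,l) * map_vec cnj x $ l)"
    using i assms by (simp add: cnj_sum)
  also have "\<dots> = (map_mat cnj A *\<^sub>v map_vec cnj x) $ i"
    by (rule mat_vec_entry[symmetric]) (use i assms in auto)
  finally show "map_vec cnj (A *\<^sub>v x) $ i = (map_mat cnj A *\<^sub>v map_vec cnj x) $ i" .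
qed (use assms in auto)

lemma cnj_Bs: "cnj s = s \<Longrightarrow> map_mat cnj (Bs s k) = Bs s k"
  by (rule eq_matI) auto

lemma cnj_JB: "map_mat cnj (JB k) = JB k"
  by (rule eq_matI) (auto simp: jordan_block_def)

definition good :: "nat \<Rightarrow> complex Matrix.mat \<Rightarrow> complex Matrix.vec \<Rightarrow> bool" where
  "good N J c \<longleftrightarrow> (\<exists>X1 X2 y1 y2. X1 \<in> carrier_mat N N \<and> X2 \<in> carrier_mat N N \<and>
      y1 \<in> carrier_vec N \<and> y2 \<in> carrier_vec N \<and> X1 * X1 = 1\<^sub>m N \<and> X2 * X2 = 1\<^sub>m N \<and>
      X1 *\<^sub>v y1 + y1 = 0\<^sub>v N \<and> X2 *\<^sub>v y2 + y2 = 0\<^sub>v N \<and> X1 * X2 = J \<and> X1 *\<^sub>v y2 + y1 = c \<and>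
      map_mat cnj X1 = X1 \<and> map_mat cnj X2 = X2 \<and> map_vec cnj y1 = y1 \<and> map_vec cnj y2 = y2)"

lemma involution_pair:
  assumes s: "s * s = 1"
  shows "Bs s k * (Bs s k * JB k) = JB k"
    and "(Bs s k * JB k) * (Bs s k * JB k) = 1\<^sub>m k"
proof -
  have c: "Bs s k \<in> carrier_mat k k" "JB k \<in> carrier_mat k k" by auto
  have "Bs s k * (Bs s k * JB k) = (Bs s k * Bs s k) * JB k"
    by (rule assoc_mult_mat[symmetric, of _ k k _ k _ k]) auto
  then show "Bs s k * (Bs s k * JB k) = JB k"
    using Bs_sq[OF s, of k] by simp
  have c2: "Bs s k * JB k \<in> carrier_mat k k" "JB k * Bs s k \<in> carrier_mat k k"
    using c by (auto simp: mult_carrier_mat)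
  have e: "JB k * (Bs s k * JB k) = (JB k * Bs s k) * JB k"
    using c by (intro assoc_mult_mat[symmetric]) auto
  have "(Bs s k * JB k) * (Bs s k * JB k) = Bs s k * (JB k * (Bs s k * JB k))"
    by (rule assoc_mult_mat[OF c(1) c(2) c2(1)])
  also have "\<dots> = Bs s k * ((JB k * Bs s k) * JB k)" using e by simp
  also have "\<dots> = 1\<^sub>m k" using JBJ[of k s] Bs_sq[OF s, of k] by simp
  finally show "(Bs s k * JB k) * (Bs s k * JB k) = 1\<^sub>m k" .
qed

lemma mult_mat_vec_zero: "A \<in> carrier_mat n k \<Longrightarrow> A *\<^sub>v 0\<^sub>v k = 0\<^sub>v n"
  by (rule eq_vecI) (auto simp: scalar_prod_def)

lemma goodI:
  assumes "X1 \<in> carrier_mat N N" "X2 \<in> carrier_mat N N"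
      "y1 \<in> carrier_vec N" "y2 \<in> carrier_vec N" "X1 * X1 = 1\<^sub>m N" "X2 * X2 = 1\<^sub>m N"
      "X1 *\<^sub>v y1 + y1 = 0\<^sub>v N" "X2 *\<^sub>v y2 + y2 = 0\<^sub>v N" "X1 * X2 = J" "X1 *\<^sub>v y2 + y1 = c"
      "map_mat cnj X1 = X1" "map_mat cnj X2 = X2" "map_vec cnj y1 = y1" "map_vec cnj y2 = y2"
  shows "good N J c"
  unfolding good_def using assms by blast

lemma good_zero: "good k (JB k) (0\<^sub>v k)"
proof (rule goodI[of "Bs 1 k" _ "Bs 1 k * JB k" "0\<^sub>v k" "0\<^sub>v k"])
  show "Bs 1 k * (Bs 1 k * JB k) = JB k"
    using involution_pair(1)[of 1 k] by simp
  show "Bs 1 k * JB k * (Bs 1 k * JB k) = 1\<^sub>m k"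
    using involution_pair(2)[of 1 k] by simp
  show "Bs 1 k * Bs 1 k = 1\<^sub>m k" using Bs_sq[of 1 k] by simp
  show "map_mat cnj (Bs 1 k * JB k) = Bs 1 k * JB k"
    by (simp add: cnj_mult_mat[of _ k k _ k] cnj_Bs cnj_JB)
  show "map_mat cnj (Bs 1 k) = Bs 1 k" by (simp add: cnj_Bs)
  have "Bs 1 k * JB k *\<^sub>v 0\<^sub>v k = 0\<^sub>v k" by (rule mult_mat_vec_zero, rule carrier_matI) auto
  then show "Bs 1 k * JB k *\<^sub>v 0\<^sub>v k + 0\<^sub>v k = 0\<^sub>v k" by simp
qed (auto simp: mult_carrier_mat mult_mat_vec_zero[of _ k k])

lemma sum_a:
  assumes "i < k"
  shows "(\<Sum>l<k. (-1)^l * of_nat (k choose l) * of_nat (l choose i) :: complex) = - ((-1)^k * of_nat (k choose i))"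
proof -
  have "(\<Sum>l<k. (-1)^l * of_nat (k choose l) * of_nat (l choose i) :: complex) + (-1)^k * of_nat (k choose i)
      = (\<Sum>l\<le>k. (-1)^l * of_nat (k choose l) * of_nat (l choose i))"
    by (simp add: lessThan_Suc_atMost[symmetric])
  also have "\<dots> = 0" using alt_choose_mult[of k i, where 'a=complex] assms by simp
  finally show ?thesis by (simp add: eq_neg_iff_add_eq_0)
qed

lemma sum_b:
  assumes "i < Suc m"
  shows "(\<Sum>l<Suc m. (-1)^l * of_nat (m choose l) * of_nat (l choose i) :: complex) = (if i = m then (-1)^m else 0)"
  using alt_choose_mult[of m i, where 'a=complex] by (simp add: lessThan_Suc_atMost)

lemma Bs_vec_entry:
  assumes "x \<in> carrier_vec k" "i < k"
  shows "(Bs s k *\<^sub>v x) $ i = (\<Sum>l<k. s * (-1)^l * of_nat (l choose i) * x $ l)"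
proof -
  have "(Bs s k *\<^sub>v x) $ i = (\<Sum>l<k. Bs s k $$ (i,l) * x $ l)"
    by (rule mat_vec_entry) (use assms in auto)
  also have "\<dots> = (\<Sum>l<k. s * (-1)^l * of_nat (l choose i) * x $ l)"
    by (rule sum.cong) (use assms in auto)
  finally show ?thesis .
qed

lemma good_unit: "good (Suc m) (JB (Suc m)) (unit_vec (Suc m) m)"
proof -
  define k where "k = Suc m"
  define \<sigma> :: complex where "\<sigma> = (-1)^k"
  have ss: "\<sigma> * \<sigma> = 1" unfolding \<sigma>_def by (simp flip: power_add add: power_even_eq)
  define X1 where "X1 = Bs \<sigma> k"
  define y1 :: "complex Matrix.vec" where "y1 = vec k (\<lambda>i. of_nat (k choose i))"
  define y2 :: "complex Matrix.vec" where "y2 = vec k (\<lambda>i. of_nat (k choose i) - of_nat (m choose i))"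
  define w :: "complex Matrix.vec" where "w = vec k (\<lambda>i. of_nat (m choose i))"
  define e :: "complex Matrix.vec" where "e = unit_vec k m"
  have c: "X1 \<in> carrier_mat k k" "JB k \<in> carrier_mat k k" "y1 \<in> carrier_vec k" "y2 \<in> carrier_vec k"
    "w \<in> carrier_vec k" "e \<in> carrier_vec k"
    by (auto simp: X1_def y1_def y2_def w_def e_def)
  have X1y1: "(X1 *\<^sub>v y1) $ i = - of_nat (k choose i)" if i: "i < k" for i
  proof -
    have "(X1 *\<^sub>v y1) $ i = (\<Sum>l<k. \<sigma> * (-1)^l * of_nat (l choose i) * y1 $ l)"
      unfolding X1_def by (rule Bs_vec_entry) (use c i in auto)
    also have "\<dots> = \<sigma> * (\<Sum>l<k. (-1)^l * of_nat (k choose l) * of_nat (l choose i))"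
      by (simp add: sum_distrib_left y1_def algebra_simps)
    also have "\<dots> = - of_nat (k choose i)" using sum_a[OF i] ss by (simp add: \<sigma>_def)
    finally show ?thesis .
  qed
  have X1w: "(X1 *\<^sub>v w) $ i = (if i = m then -1 else 0)" if i: "i < k" for i
  proof -
    have "(X1 *\<^sub>v w) $ i = (\<Sum>l<k. \<sigma> * (-1)^l * of_nat (l choose i) * w $ l)"
      unfolding X1_def by (rule Bs_vec_entry) (use c i in auto)
    also have "\<dots> = \<sigma> * (\<Sum>l<Suc m. (-1)^l * of_nat (m choose l) * of_nat (l choose i))"
      by (simp add: sum_distrib_left w_def algebra_simps k_def)
    also have "\<dots> = (if i = m then -1 else 0)" using sum_b[of i m] i
      by (simp add: \<sigma>_def k_def)
    finally show ?thesis .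
  qed
  have X1e: "(X1 *\<^sub>v e) $ i = - of_nat (m choose i)" if i: "i < k" for i
  proof -
    have "(X1 *\<^sub>v e) $ i = (\<Sum>l<k. \<sigma> * (-1)^l * of_nat (l choose i) * e $ l)"
      unfolding X1_def by (rule Bs_vec_entry) (use c i in auto)
    also have "\<dots> = (\<Sum>l<k. if l = m then \<sigma> * (-1)^m * of_nat (m choose i) else 0)"
      by (rule sum.cong) (auto simp: e_def k_def)
    also have "\<dots> = - of_nat (m choose i)"
      by (simp add: k_def \<sigma>_def)
    finally show ?thesis .
  qed
  have Jy2: "JB k *\<^sub>v y2 = y1 - e"
  proof (rule eq_vecI)
    fix i assume "i < dim_vec (y1 - e)"
    then have i: "i < k" using c by auto
    show "(JB k *\<^sub>v y2) $ i = (y1 - e) $ i"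
    proof (cases "Suc i < k")
      case True
      have p: "(k choose Suc i) = (m choose i) + (m choose Suc i)" by (simp add: k_def)
      show ?thesis using J_left_vec[OF c(4) i] True i
        by (simp add: y2_def y1_def e_def p k_def)
    next
      case False
      then have "i = m" using i k_def by simp
      then show ?thesis using J_left_vec[OF c(4) i] False i
        by (simp add: y2_def y1_def e_def k_def)
    qed
  qed (use c in auto)
  have G5a: "X1 *\<^sub>v (y1 - e) + y2 = 0\<^sub>v k"
  proof (rule eq_vecI)
    fix i assume "i < dim_vec (0\<^sub>v k :: complex Matrix.vec)"
    then have i: "i < k" by simp
    have "X1 *\<^sub>v (y1 - e) = X1 *\<^sub>v y1 - X1 *\<^sub>v e" using c by (simp add: mult_minus_distrib_mat_vec)
    then show "(X1 *\<^sub>v (y1 - e) + y2) $ i = 0\<^sub>v k $ i"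
      using X1y1[OF i] X1e[OF i] i c by (simp add: y2_def)
  qed (use c in auto)
  show ?thesis unfolding k_def[symmetric]
  proof (rule goodI[of X1 _ "X1 * JB k" y1 y2])
    show "X1 * X1 = 1\<^sub>m k" unfolding X1_def by (rule Bs_sq[OF ss])
    show "X1 * JB k * (X1 * JB k) = 1\<^sub>m k" unfolding X1_def by (rule involution_pair(2)[OF ss])
    show "X1 * (X1 * JB k) = JB k" unfolding X1_def by (rule involution_pair(1)[OF ss])
    show "map_mat cnj (X1 * JB k) = X1 * JB k"
      by (simp add: X1_def cnj_mult_mat[of _ k k _ k] cnj_Bs cnj_JB \<sigma>_def)
    show "map_mat cnj X1 = X1" by (simp add: X1_def cnj_Bs \<sigma>_def)
    show "map_vec cnj y1 = y1" by (rule eq_vecI) (auto simp: y1_def)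
    show "map_vec cnj y2 = y2" by (rule eq_vecI) (auto simp: y2_def)
    show "X1 *\<^sub>v y1 + y1 = 0\<^sub>v k"
      by (rule eq_vecI) (use c X1y1 in \<open>auto simp: y1_def\<close>)
    show "X1 *\<^sub>v y2 + y1 = unit_vec k m"
    proof (rule eq_vecI)
      fix i assume "i < dim_vec (unit_vec k m :: complex Matrix.vec)"
      then have i: "i < k" by simp
      have "y2 = y1 - w" by (rule eq_vecI) (auto simp: y1_def y2_def w_def)
      then have "X1 *\<^sub>v y2 = X1 *\<^sub>v y1 - X1 *\<^sub>v w" using c by (simp add: mult_minus_distrib_mat_vec)
      then show "(X1 *\<^sub>v y2 + y1) $ i = unit_vec k m $ i"
        using X1y1[OF i] X1w[OF i] i c by (simp add: y1_def k_def)
    qed (use c in auto)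
    show "X1 * JB k *\<^sub>v y2 + y2 = 0\<^sub>v k"
      using G5a Jy2 c by (simp add: assoc_mult_mat_vec[of _ k k _ k])
  qed (use c in \<open>auto simp: mult_carrier_mat\<close>)
qed

definition red :: "nat \<Rightarrow> complex Matrix.mat \<Rightarrow> complex Matrix.vec \<Rightarrow> bool" where
  "red N J c \<longleftrightarrow> (\<exists>K K' a. K \<in> carrier_mat N N \<and> K' \<in> carrier_mat N N \<and> a \<in> carrier_vec N \<and>
     K * K' = 1\<^sub>m N \<and> K' * K = 1\<^sub>m N \<and> K' * J * K = J \<and> good N J (K' *\<^sub>v (J *\<^sub>v a + c - a)))"

lemma scal_one_mult_left: "B \<in> carrier_mat k n \<Longrightarrow> (x \<cdot>\<^sub>m 1\<^sub>m k) * B = (x :: complex) \<cdot>\<^sub>m B"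
  by (subst mult_smult_assoc_mat[of _ k k]) auto

lemma scal_one_mult_right: "B \<in> carrier_mat n k \<Longrightarrow> B * (x \<cdot>\<^sub>m 1\<^sub>m k) = (x :: complex) \<cdot>\<^sub>m B"
  by (subst mult_smult_distrib[of _ n k]) auto

lemma scal_one_mult_vec:
  assumes "v \<in> carrier_vec k"
  shows "(x \<cdot>\<^sub>m 1\<^sub>m k) *\<^sub>v v = (x :: complex) \<cdot>\<^sub>v v"
proof (rule eq_vecI)
  fix i assume "i < dim_vec (x \<cdot>\<^sub>v v)"
  then have i: "i < k" using assms by simp
  have "((x \<cdot>\<^sub>m 1\<^sub>m k) *\<^sub>v v) $ i = (\<Sum>l<k. (x \<cdot>\<^sub>m 1\<^sub>m k) $$ (i,l) * v $ l)"
    by (rule mat_vec_entry) (use assms i in auto)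
  also have "\<dots> = (\<Sum>l<k. if l = i then x * v $ l else 0)"
    by (rule sum.cong) (use i in auto)
  also have "\<dots> = (x \<cdot>\<^sub>v v) $ i" using i assms by simp
  finally show "((x \<cdot>\<^sub>m 1\<^sub>m k) *\<^sub>v v) $ i = (x \<cdot>\<^sub>v v) $ i" .
qed (use assms in auto)

lemma red_block:
  assumes u: "u \<in> carrier_vec k"
  shows "red k (JB k) u"
proof (cases k)
  case 0
  have g: "good k (JB k) (0\<^sub>v k)" by (rule good_zero)
  have z: "\<And>x. x \<in> carrier_vec k \<Longrightarrow> x = 0\<^sub>v k" using 0 by (auto intro!: eq_vecI)
  have "1\<^sub>m k *\<^sub>v (JB k *\<^sub>v 0\<^sub>v k + u - 0\<^sub>v k) \<in> carrier_vec k"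
    by (rule carrier_vecI) simp
  then have "1\<^sub>m k *\<^sub>v (JB k *\<^sub>v 0\<^sub>v k + u - 0\<^sub>v k) = 0\<^sub>v k" by (rule z)
  then have "good k (JB k) (1\<^sub>m k *\<^sub>v (JB k *\<^sub>v 0\<^sub>v k + u - 0\<^sub>v k))" using g by simp
  then show ?thesis unfolding red_def
    by (intro exI[of _ "1\<^sub>m k"] exI[of _ "0\<^sub>v k"]) auto
next
  case (Suc m)
  define \<mu> where "\<mu> = u $ m"
  define a :: "complex Matrix.vec" where "a = vec k (\<lambda>i. if i = 0 then 0 else - u $ (i - 1))"
  have ac: "a \<in> carrier_vec k" by (simp add: a_def)
  have Ja: "JB k *\<^sub>v a + u - a = \<mu> \<cdot>\<^sub>v unit_vec k m"
  proof (rule eq_vecI)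
    fix i assume "i < dim_vec (\<mu> \<cdot>\<^sub>v unit_vec k m)"
    then have i: "i < k" by simp
    show "(JB k *\<^sub>v a + u - a) $ i = (\<mu> \<cdot>\<^sub>v unit_vec k m) $ i"
      using J_left_vec[OF ac i] i u Suc by (auto simp: a_def \<mu>_def)
  qed (use u in \<open>auto simp: a_def\<close>)
  show ?thesis
  proof (cases "\<mu> = 0")
    case True
    have "good k (JB k) (0\<^sub>v k)" by (rule good_zero)
    moreover have "JB k *\<^sub>v a + u - a = 0\<^sub>v k" using Ja True by (auto intro!: eq_vecI)
    ultimately show ?thesis unfolding red_def using ac u
      by (intro exI[of _ "1\<^sub>m k"] exI[of _ a]) auto
  next
    case False
    define K where "K = \<mu> \<cdot>\<^sub>m 1\<^sub>m k"
    define K' where "K' = (1 / \<mu>) \<cdot>\<^sub>m 1\<^sub>m k"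
    have f1: "K * K' = 1\<^sub>m k" unfolding K_def K'_def using False
      by (subst scal_one_mult_left[of _ k k]) (auto intro!: eq_matI)
    have f2: "K' * K = 1\<^sub>m k" unfolding K_def K'_def using False
      by (subst scal_one_mult_left[of _ k k]) (auto intro!: eq_matI)
    have "K' * JB k = (1 / \<mu>) \<cdot>\<^sub>m JB k" unfolding K'_def by (rule scal_one_mult_left[of _ k k]) simp
    then have "K' * JB k * K = ((1 / \<mu>) \<cdot>\<^sub>m JB k) * (\<mu> \<cdot>\<^sub>m 1\<^sub>m k)" by (simp add: K_def)
    also have "\<dots> = \<mu> \<cdot>\<^sub>m ((1 / \<mu>) \<cdot>\<^sub>m JB k)" by (rule scal_one_mult_right[of _ k k]) simp
    also have "\<dots> = JB k" using False by (auto intro!: eq_matI)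
    finally have f3: "K' * JB k * K = JB k" .
    have f4: "K' *\<^sub>v (JB k *\<^sub>v a + u - a) = unit_vec k m"
      unfolding Ja K'_def using False by (subst scal_one_mult_vec[of _ k]) (auto intro!: eq_vecI)
    have f5: "good k (JB k) (unit_vec k m)" using good_unit[of m] Suc by simp
    have f6: "K \<in> carrier_mat k k" "K' \<in> carrier_mat k k" by (auto simp: K_def K'_def)
    show ?thesis unfolding red_def
      by (intro exI[of _ K] exI[of _ K'] exI[of _ a] conjI f1 f2 f3 f6 ac) (simp only: f4 f5)
  qed
qed

abbreviation bd :: "nat \<Rightarrow> nat \<Rightarrow> complex Matrix.mat \<Rightarrow> complex Matrix.mat \<Rightarrow> complex Matrix.mat" where
  "bd n1 n2 A B \<equiv> four_block_mat A (0\<^sub>m n1 n2) (0\<^sub>m n2 n1) B"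

lemma bd_carrier: "A \<in> carrier_mat n1 n1 \<Longrightarrow> B \<in> carrier_mat n2 n2 \<Longrightarrow> bd n1 n2 A B \<in> carrier_mat (n1+n2) (n1+n2)"
  by (rule four_block_carrier_mat)

lemma bd_mult:
  assumes "A \<in> carrier_mat n1 n1" "A' \<in> carrier_mat n1 n1" "B \<in> carrier_mat n2 n2" "B' \<in> carrier_mat n2 n2"
  shows "bd n1 n2 A B * bd n1 n2 A' B' = bd n1 n2 (A * A') (B * B')"
  using assms by (subst mult_four_block_mat[OF assms(1) zero_carrier_mat zero_carrier_mat assms(3)
      assms(2) zero_carrier_mat zero_carrier_mat assms(4)]) auto

lemma bd_vec:
  assumes "A \<in> carrier_mat n1 n1" "B \<in> carrier_mat n2 n2" "x \<in> carrier_vec n1" "y \<in> carrier_vec n2"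
  shows "bd n1 n2 A B *\<^sub>v (x @\<^sub>v y) = (A *\<^sub>v x) @\<^sub>v (B *\<^sub>v y)"
  by (rule mult_mat_vec_split[OF assms])

lemma app_add:
  assumes "x \<in> carrier_vec n1" "x' \<in> carrier_vec n1" "y \<in> carrier_vec n2" "y' \<in> carrier_vec n2"
  shows "(x @\<^sub>v y) + (x' @\<^sub>v y') = (x + x') @\<^sub>v (y + y')"
  by (rule append_vec_add[OF assms(1,2,3,4)])

lemma app_minus:
  assumes "x \<in> carrier_vec n1" "x' \<in> carrier_vec n1" "y \<in> carrier_vec n2" "y' \<in> carrier_vec n2"
  shows "(x @\<^sub>v y) - (x' @\<^sub>v y') = (x - x') @\<^sub>v (y - y')"
  by (rule eq_vecI) (use assms in auto)

lemma app_zero: "0\<^sub>v n1 @\<^sub>v 0\<^sub>v n2 = (0\<^sub>v (n1 + n2) :: complex Matrix.vec)"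
  by (rule eq_vecI) auto

lemma app_cnj: "map_vec cnj (x @\<^sub>v y) = map_vec cnj x @\<^sub>v map_vec cnj y"
  by (rule eq_vecI) auto

lemma bd_cnj:
  assumes "A \<in> carrier_mat n1 n1" "B \<in> carrier_mat n2 n2"
  shows "map_mat cnj (bd n1 n2 A B) = bd n1 n2 (map_mat cnj A) (map_mat cnj B)"
  using assms by (subst map_four_block_mat[OF assms(1) zero_carrier_mat zero_carrier_mat assms(2)]) auto

lemma good_sum:
  assumes g1: "good n1 A c" and g2: "good n2 B d"
  shows "good (n1 + n2) (bd n1 n2 A B) (c @\<^sub>v d)"
proof -
  obtain X1 X2 y1 y2 where h1: "X1 \<in> carrier_mat n1 n1" "X2 \<in> carrier_mat n1 n1"
      "y1 \<in> carrier_vec n1" "y2 \<in> carrier_vec n1" "X1 * X1 = 1\<^sub>m n1" "X2 * X2 = 1\<^sub>m n1"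
      "X1 *\<^sub>v y1 + y1 = 0\<^sub>v n1" "X2 *\<^sub>v y2 + y2 = 0\<^sub>v n1" "X1 * X2 = A" "X1 *\<^sub>v y2 + y1 = c"
      "map_mat cnj X1 = X1" "map_mat cnj X2 = X2" "map_vec cnj y1 = y1" "map_vec cnj y2 = y2"
    using g1 unfolding good_def by blast
  obtain Z1 Z2 z1 z2 where h2: "Z1 \<in> carrier_mat n2 n2" "Z2 \<in> carrier_mat n2 n2"
      "z1 \<in> carrier_vec n2" "z2 \<in> carrier_vec n2" "Z1 * Z1 = 1\<^sub>m n2" "Z2 * Z2 = 1\<^sub>m n2"
      "Z1 *\<^sub>v z1 + z1 = 0\<^sub>v n2" "Z2 *\<^sub>v z2 + z2 = 0\<^sub>v n2" "Z1 * Z2 = B" "Z1 *\<^sub>v z2 + z1 = d"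
      "map_mat cnj Z1 = Z1" "map_mat cnj Z2 = Z2" "map_vec cnj z1 = z1" "map_vec cnj z2 = z2"
    using g2 unfolding good_def by blast
  show ?thesis
  proof (rule goodI[of "bd n1 n2 X1 Z1" _ "bd n1 n2 X2 Z2" "y1 @\<^sub>v z1" "y2 @\<^sub>v z2"])
    show "bd n1 n2 X1 Z1 * bd n1 n2 X1 Z1 = 1\<^sub>m (n1 + n2)"
      using h1 h2 by (simp add: bd_mult)
    show "bd n1 n2 X2 Z2 * bd n1 n2 X2 Z2 = 1\<^sub>m (n1 + n2)"
      using h1 h2 by (simp add: bd_mult)
    show "bd n1 n2 X1 Z1 * bd n1 n2 X2 Z2 = bd n1 n2 A B"
      using h1 h2 by (simp add: bd_mult)
    show "bd n1 n2 X1 Z1 *\<^sub>v (y1 @\<^sub>v z1) + (y1 @\<^sub>v z1) = 0\<^sub>v (n1 + n2)"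
      using h1 h2 by (simp add: bd_vec app_add[of _ n1 _ _ n2] app_zero)
    show "bd n1 n2 X2 Z2 *\<^sub>v (y2 @\<^sub>v z2) + (y2 @\<^sub>v z2) = 0\<^sub>v (n1 + n2)"
      using h1 h2 by (simp add: bd_vec app_add[of _ n1 _ _ n2] app_zero)
    show "bd n1 n2 X1 Z1 *\<^sub>v (y2 @\<^sub>v z2) + (y1 @\<^sub>v z1) = c @\<^sub>v d"
      using h1 h2 by (simp add: bd_vec app_add[of _ n1 _ _ n2])
    show "map_mat cnj (bd n1 n2 X1 Z1) = bd n1 n2 X1 Z1" using h1 h2 by (simp add: bd_cnj)
    show "map_mat cnj (bd n1 n2 X2 Z2) = bd n1 n2 X2 Z2" using h1 h2 by (simp add: bd_cnj)
    show "map_vec cnj (y1 @\<^sub>v z1) = y1 @\<^sub>v z1" using h1 h2 by (simp add: app_cnj)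
    show "map_vec cnj (y2 @\<^sub>v z2) = y2 @\<^sub>v z2" using h1 h2 by (simp add: app_cnj)
  qed (use h1 h2 in \<open>auto intro: bd_carrier\<close>)
qed

lemma red_sum:
  assumes r1: "red n1 A u" and r2: "red n2 B v"
    and A: "A \<in> carrier_mat n1 n1" and B: "B \<in> carrier_mat n2 n2"
    and u: "u \<in> carrier_vec n1" and v: "v \<in> carrier_vec n2"
  shows "red (n1 + n2) (bd n1 n2 A B) (u @\<^sub>v v)"
proof -
  obtain K1 K1' a1 where h1: "K1 \<in> carrier_mat n1 n1" "K1' \<in> carrier_mat n1 n1" "a1 \<in> carrier_vec n1"
     "K1 * K1' = 1\<^sub>m n1" "K1' * K1 = 1\<^sub>m n1" "K1' * A * K1 = A" "good n1 A (K1' *\<^sub>v (A *\<^sub>v a1 + u - a1))"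
    using r1 unfolding red_def by blast
  obtain K2 K2' a2 where h2: "K2 \<in> carrier_mat n2 n2" "K2' \<in> carrier_mat n2 n2" "a2 \<in> carrier_vec n2"
     "K2 * K2' = 1\<^sub>m n2" "K2' * K2 = 1\<^sub>m n2" "K2' * B * K2 = B" "good n2 B (K2' *\<^sub>v (B *\<^sub>v a2 + v - a2))"
    using r2 unfolding red_def by blast
  have m1: "K1' * A \<in> carrier_mat n1 n1" using h1 A by (auto intro: mult_carrier_mat)
  have m2: "K2' * B \<in> carrier_mat n2 n2" using h2 B by (auto intro: mult_carrier_mat)
  have e1: "bd n1 n2 K1 K2 * bd n1 n2 K1' K2' = 1\<^sub>m (n1 + n2)"
    using h1 h2 by (simp add: bd_mult)
  have e2: "bd n1 n2 K1' K2' * bd n1 n2 K1 K2 = 1\<^sub>m (n1 + n2)"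
    using h1 h2 by (simp add: bd_mult)
  have e3: "bd n1 n2 K1' K2' * bd n1 n2 A B * bd n1 n2 K1 K2 = bd n1 n2 A B"
    using h1 h2 A B m1 m2 by (simp add: bd_mult)
  have e4: "bd n1 n2 K1' K2' *\<^sub>v (bd n1 n2 A B *\<^sub>v (a1 @\<^sub>v a2) + (u @\<^sub>v v) - (a1 @\<^sub>v a2))
      = (K1' *\<^sub>v (A *\<^sub>v a1 + u - a1)) @\<^sub>v (K2' *\<^sub>v (B *\<^sub>v a2 + v - a2))"
    using h1 h2 A B u v by (simp add: bd_vec app_add[of _ n1 _ _ n2] app_minus[of _ n1 _ _ n2])
  have g: "good (n1 + n2) (bd n1 n2 A B) ((K1' *\<^sub>v (A *\<^sub>v a1 + u - a1)) @\<^sub>v (K2' *\<^sub>v (B *\<^sub>v a2 + v - a2)))"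
    by (rule good_sum[OF h1(7) h2(7)])
  show ?thesis unfolding red_def
    by (intro exI[of _ "bd n1 n2 K1 K2"] exI[of _ "bd n1 n2 K1' K2'"] exI[of _ "a1 @\<^sub>v a2"] conjI e1 e2 e3
        bd_carrier h1(1,2,3) h2(1,2,3) append_carrier_vec) (simp only: e4 g)
qed

lemma red_jordan:
  assumes "\<forall>p \<in> set n_as. snd p = 1"
    and "c \<in> carrier_vec (sum_list (map fst n_as))"
  shows "red (sum_list (map fst n_as)) (jordan_matrix n_as) c"
  using assms
proof (induction n_as arbitrary: c)
  case Nil
  have j: "jordan_matrix [] = (JB 0 :: complex Matrix.mat)"
    by (rule eq_matI) (auto simp: jordan_matrix_def)
  have "c = 0\<^sub>v 0" using Nil by (auto intro!: eq_vecI)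
  then show ?case using red_block[of "0\<^sub>v 0" 0] j by simp
next
  case (Cons p rest)
  obtain k a where p: "p = (k, a)" by force
  have a: "a = 1" using Cons.prems p by auto
  define N where "N = sum_list (map fst rest)"
  have jc: "jordan_matrix rest \<in> carrier_mat N N" unfolding N_def by simp
  have J: "jordan_matrix (p # rest) = bd k N (JB k) (jordan_matrix rest)"
    using jc by (simp add: p a jordan_matrix_def Let_def N_def)
  have cc: "c \<in> carrier_vec (k + N)" using Cons.prems p by (simp add: N_def)
  have c: "c = vec_first c k @\<^sub>v vec_last c N" using cc by simp
  have r2: "red N (jordan_matrix rest) (vec_last c N)"
    unfolding N_def by (rule Cons.IH) (use Cons.prems in \<open>auto simp: N_def\<close>)
  have "red (k + N) (bd k N (JB k) (jordan_matrix rest)) (vec_first c k @\<^sub>v vec_last c N)"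
    by (rule red_sum[OF red_block r2]) (use jc in auto)
  then show ?case using J c p by (simp add: N_def)
qed

lemma poly_jordan_root:
  "(k, b) \<in> set n_as \<Longrightarrow> 0 < k \<Longrightarrow> poly (\<Prod>(n, a)\<leftarrow>n_as. [:- a, 1:] ^ n) b = (0::complex)"
  by (induction n_as) auto

lemma mat_main:
  fixes A :: "complex Matrix.mat"
  assumes A: "A \<in> carrier_mat n n"
    and ev: "\<forall>a v. v \<in> carrier_vec n \<and> v \<noteq> 0\<^sub>v n \<and> A *\<^sub>v v = a \<cdot>\<^sub>v v \<longrightarrow> a = 1"
  shows "\<exists>P Q J. P \<in> carrier_mat n n \<and> Q \<in> carrier_mat n n \<and> J \<in> carrier_mat n n \<and>
     P * Q = 1\<^sub>m n \<and> Q * P = 1\<^sub>m n \<and> A = P * J * Q \<and> (\<forall>c \<in> carrier_vec n. red n J c)"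
proof -
  obtain as where "char_poly A = (\<Prod>a\<leftarrow>as. [:- a, 1:])"
    using char_poly_factorized[OF A] by blast
  from jordan_nf_exists[OF A this] obtain n_as where jnf: "jordan_nf A n_as" by blast
  then have z: "0 \<notin> fst ` set n_as" and sim: "similar_mat A (jordan_matrix n_as)"
    unfolding jordan_nf_def by auto
  from sim obtain P Q where w: "similar_mat_wit A (jordan_matrix n_as) P Q"
    unfolding similar_mat_def by blast
  have dA: "dim_row A = n" using A by simp
  from w have PQ: "P \<in> carrier_mat n n" "Q \<in> carrier_mat n n" "jordan_matrix n_as \<in> carrier_mat n n"
    "P * Q = 1\<^sub>m n" "Q * P = 1\<^sub>m n" "A = P * jordan_matrix n_as * Q"
    unfolding similar_mat_wit_def Let_def dA by auto
  have N: "sum_list (map fst n_as) = n" using PQ(3) jordan_matrix_dim(1)[of n_as] unfolding carrier_mat_def by simp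
  have cp: "char_poly A = (\<Prod>(n, a)\<leftarrow>n_as. [:- a, 1:] ^ n)"
    using char_poly_similar[OF sim] jordan_matrix_char_poly by simp
  have ones: "\<forall>p \<in> set n_as. snd p = 1"
  proof
    fix p assume p: "p \<in> set n_as"
    obtain k b where kb: "p = (k, b)" by force
    have "0 < k" using z p kb by (metis fst_conv gr0I image_eqI)
    then have "poly (char_poly A) b = 0" using cp poly_jordan_root[of k b n_as] p kb by simp
    then have "eigenvalue A b" using eigenvalue_root_char_poly[OF A] by simp
    then obtain v where "eigenvector A v b" unfolding eigenvalue_def by blast
    then have "v \<in> carrier_vec n" "v \<noteq> 0\<^sub>v n" "A *\<^sub>v v = b \<cdot>\<^sub>v v" unfolding eigenvector_def dA by auto
    then have "b = 1" using ev by blast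
    then show "snd p = 1" using kb by simp
  qed
  have "\<forall>c \<in> carrier_vec n. red n (jordan_matrix n_as) c"
    using red_jordan[OF ones] N by auto
  then show ?thesis using PQ by blast
qed

section \<open>Conversion between the two matrix representations\<close>

definition ix :: "'n::finite \<Rightarrow> nat" where
  "ix = (SOME f. bij_betw f (UNIV::'n set) {0..<CARD('n)})"

lemma ix_bij: "bij_betw (ix::'n::finite \<Rightarrow> nat) UNIV {0..<CARD('n)}"
  unfolding ix_def
  by (rule someI_ex[of "\<lambda>f. bij_betw f (UNIV::'n set) {0..<CARD('n)}"]) (rule ex_bij_betw_finite_nat, simp)

definition ixi :: "nat \<Rightarrow> 'n::finite" where "ixi = inv_into UNIV ix"

lemma ix_lt[simp]: "ix (i::'n::finite) < CARD('n)"
  using ix_bij[where 'n='n] by (auto simp: bij_betw_def)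

lemma ixi_ix[simp]: "ixi (ix (i::'n::finite)) = i"
  using ix_bij[where 'n='n] unfolding ixi_def by (auto simp: bij_betw_def)

lemma ix_ixi[simp]: "l < CARD('n::finite) \<Longrightarrow> ix (ixi l :: 'n) = l"
  using ix_bij[where 'n='n] unfolding ixi_def bij_betw_def by (auto intro!: f_inv_into_f)

lemma ix_inj[simp]: "(ix (i::'n::finite) = ix j) \<longleftrightarrow> i = j"
  by (metis ixi_ix)

lemma sum_ix: "(\<Sum>k\<in>(UNIV::'n::finite set). f (ix k)) = (\<Sum>l<CARD('n). f l)"
  using sum.reindex_bij_betw[OF ix_bij[where 'n='n], of f] by (simp add: lessThan_atLeast0)

definition fm :: "complex Matrix.mat \<Rightarrow> complex^'n::finite^'n" where
  "fm M = (\<chi> i j. M $$ (ix i, ix j))"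

definition fv :: "complex Matrix.vec \<Rightarrow> complex^'n::finite" where
  "fv y = (\<chi> i. Matrix.vec_index y (ix i))"

definition tm :: "complex^'n::finite^'n \<Rightarrow> complex Matrix.mat" where
  "tm A = Matrix.mat CARD('n) CARD('n) (\<lambda>(i,j). vec_nth (vec_nth A (ixi i)) (ixi j))"

definition tv :: "complex^'n::finite \<Rightarrow> complex Matrix.vec" where
  "tv x = Matrix.vec CARD('n) (\<lambda>i. vec_nth x (ixi i))"

lemma fm_tm: "fm (tm (A :: complex^'n::finite^'n)) = A"
  by (simp add: fm_def tm_def Finite_Cartesian_Product.vec_eq_iff)

lemma fv_tv: "fv (tv (x :: complex^'n::finite)) = x"
  by (simp add: fv_def tv_def Finite_Cartesian_Product.vec_eq_iff)

lemma tm_carrier: "tm (A :: complex^'n::finite^'n) \<in> carrier_mat CARD('n) CARD('n)"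
  by (simp add: tm_def)

lemma tv_carrier: "tv (x :: complex^'n::finite) \<in> carrier_vec CARD('n)"
  by (simp add: tv_def)

lemma tv_fv: "y \<in> carrier_vec CARD('n::finite) \<Longrightarrow> tv (fv y :: complex^'n) = y"
  by (rule eq_vecI) (auto simp: fv_def tv_def)

lemma fm_mult:
  assumes "M1 \<in> carrier_mat CARD('n::finite) CARD('n)" "M2 \<in> carrier_mat CARD('n) CARD('n)"
  shows "(fm (M1 * M2) :: complex^'n^'n) = fm M1 ** fm M2"
proof -
  have "vec_nth (vec_nth (fm (M1 * M2) :: complex^'n^'n) i) j = vec_nth (vec_nth (fm M1 ** fm M2 :: complex^'n^'n) i) j" for i j
  proof -
    have "vec_nth (vec_nth (fm M1 ** fm M2 :: complex^'n^'n) i) j = (\<Sum>k\<in>(UNIV::'n set). M1 $$ (ix i, ix k) * M2 $$ (ix k, ix j))"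
      by (simp add: matrix_matrix_mult_def fm_def)
    also have "\<dots> = (\<Sum>l<CARD('n). M1 $$ (ix i, l) * M2 $$ (l, ix j))"
      by (rule sum_ix)
    also have "\<dots> = (M1 * M2) $$ (ix i, ix j)"
      by (rule mat_mult_entry[symmetric]) (use assms in auto)
    finally show ?thesis by (simp add: fm_def)
  qed
  then show ?thesis by (simp add: Finite_Cartesian_Product.vec_eq_iff)
qed

lemma fv_mult:
  assumes "M \<in> carrier_mat CARD('n::finite) CARD('n)" "y \<in> carrier_vec CARD('n)"
  shows "(fv (M *\<^sub>v y) :: complex^'n) = fm M *v fv y"
proof -
  have "vec_nth (fv (M *\<^sub>v y) :: complex^'n) i = vec_nth (fm M *v fv y :: complex^'n) i" for i
  proof -
    have "vec_nth (fm M *v fv y :: complex^'n) i = (\<Sum>k\<in>(UNIV::'n set). M $$ (ix i, ix k) * Matrix.vec_index y (ix k))"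
      by (simp add: matrix_vector_mult_def fm_def fv_def)
    also have "\<dots> = (\<Sum>l<CARD('n). M $$ (ix i, l) * Matrix.vec_index y l)"
      by (rule sum_ix)
    also have "\<dots> = Matrix.vec_index (M *\<^sub>v y) (ix i)"
      by (rule mat_vec_entry[symmetric]) (use assms in auto)
    finally show ?thesis by (simp add: fv_def)
  qed
  then show ?thesis by (simp add: Finite_Cartesian_Product.vec_eq_iff)
qed

lemma fm_one: "(fm (1\<^sub>m CARD('n::finite)) :: complex^'n^'n) = Finite_Cartesian_Product.mat 1"
  by (simp add: fm_def Finite_Cartesian_Product.vec_eq_iff Finite_Cartesian_Product.mat_def)

lemma fv_add:
  assumes "y \<in> carrier_vec CARD('n::finite)" "z \<in> carrier_vec CARD('n)"
  shows "(fv (y + z) :: complex^'n) = fv y + fv z"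
  using assms by (simp add: fv_def Finite_Cartesian_Product.vec_eq_iff)

lemma fv_minus:
  assumes "y \<in> carrier_vec CARD('n::finite)" "z \<in> carrier_vec CARD('n)"
  shows "(fv (y - z) :: complex^'n) = fv y - fv z"
  using assms by (simp add: fv_def Finite_Cartesian_Product.vec_eq_iff)

lemma fv_zero: "(fv (0\<^sub>v CARD('n::finite)) :: complex^'n) = 0"
  by (simp add: fv_def Finite_Cartesian_Product.vec_eq_iff)

lemma fv_smult: "y \<in> carrier_vec CARD('n::finite) \<Longrightarrow> (fv (a \<cdot>\<^sub>v y) :: complex^'n) = a *s fv y"
  by (simp add: fv_def Finite_Cartesian_Product.vec_eq_iff)

lemma fm_cnj: "M \<in> carrier_mat CARD('n::finite) CARD('n) \<Longrightarrow>
    (fm (map_mat cnj M) :: complex^'n^'n) = (\<chi> i j. cnj (vec_nth (vec_nth (fm M :: complex^'n^'n) i) j))"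
  by (simp add: fm_def Finite_Cartesian_Product.vec_eq_iff)

lemma fv_cnj: "y \<in> carrier_vec CARD('n::finite) \<Longrightarrow>
    (fv (map_vec cnj y) :: complex^'n) = (\<chi> i. cnj (vec_nth (fv y :: complex^'n) i))"
  by (simp add: fv_def Finite_Cartesian_Product.vec_eq_iff)

section \<open>Affine algebra\<close>

lemma mvneg: "(A :: complex^'n::finite^'m::finite) *v (- x) = - (A *v x)"
  using matrix_vector_mult_diff_distrib[of A 0 x] by simp

lemma aff_mult_simp: "aff_mult (A, v) (B, w) = (A ** B, A *v w + v)"
  by (simp add: aff_mult_def)

lemma aff_conj_simp: "aff_conj (A, v) = ((\<chi> i j. cnj (vec_nth (vec_nth A i) j)), (\<chi> i. cnj (vec_nth v i)))"
  by (simp add: aff_conj_def)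

lemma aff_assoc: "aff_mult (aff_mult a b) c = aff_mult a (aff_mult (b :: 'n::finite aff) c)"
  by (cases a; cases b; cases c)
     (simp add: aff_mult_def matrix_mul_assoc matrix_vector_mul_assoc matrix_vector_right_distrib add.assoc)

lemma aff_id_l[simp]: "aff_mult aff_id a = (a :: 'n::finite aff)"
  by (cases a) (simp add: aff_mult_def aff_id_def)

lemma aff_id_r[simp]: "aff_mult a aff_id = (a :: 'n::finite aff)"
  by (cases a) (simp add: aff_mult_def aff_id_def)

lemma aff_conj_mult: "aff_conj (aff_mult a b) = aff_mult (aff_conj a) (aff_conj (b :: 'n::finite aff))"
  by (cases a; cases b)
     (simp add: aff_mult_def aff_conj_def Finite_Cartesian_Product.vec_eq_iff matrix_matrix_mult_def
        matrix_vector_mult_def cnj_sum)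

lemma aff_conj_conj[simp]: "aff_conj (aff_conj a) = (a :: 'n::finite aff)"
  by (cases a) (simp add: aff_conj_def Finite_Cartesian_Product.vec_eq_iff)

lemma aff_conj_id[simp]: "aff_conj aff_id = (aff_id :: 'n::finite aff)"
  by (simp add: aff_conj_def aff_id_def Finite_Cartesian_Product.vec_eq_iff Finite_Cartesian_Product.mat_def)

lemma aff_inv_comm:
  assumes "aff_mult a b = (aff_id :: 'n::finite aff)"
  shows "aff_mult b a = aff_id"
proof -
  obtain A v where a: "a = (A, v)" by force
  obtain B w where b: "b = (B, w)" by force
  have AB: "A ** B = Finite_Cartesian_Product.mat 1" and v: "A *v w + v = 0"
    using assms by (simp_all add: a b aff_mult_def aff_id_def)
  have BA: "B ** A = Finite_Cartesian_Product.mat 1" using AB matrix_left_right_inverse by blast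
  have "B *v v + w = B *v (A *v w + v)"
    by (simp add: matrix_vector_right_distrib matrix_vector_mul_assoc BA)
  also have "\<dots> = 0" using v by simp
  finally show ?thesis by (simp add: a b aff_mult_def aff_id_def BA)
qed

lemma matrix_inv_eq:
  fixes A B :: "complex^'n::finite^'n"
  assumes "A ** B = Finite_Cartesian_Product.mat 1"
  shows "matrix_inv A = B"
proof -
  have BA: "B ** A = Finite_Cartesian_Product.mat 1" using assms matrix_left_right_inverse by blast
  have "A ** matrix_inv A = Finite_Cartesian_Product.mat 1 \<and> matrix_inv A ** A = Finite_Cartesian_Product.mat 1"
    unfolding matrix_inv_def by (rule someI[of _ B]) (use assms BA in simp)
  then have "matrix_inv A ** A = Finite_Cartesian_Product.mat 1" by simp
  then have "matrix_inv A ** A ** B = B" by simp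
  then show ?thesis by (simp add: assms flip: matrix_mul_assoc)
qed

lemma aff_inv_eq:
  assumes "aff_mult a b = (aff_id :: 'n::finite aff)"
  shows "aff_inv a = b"
proof -
  obtain A v where a: "a = (A, v)" by force
  obtain B w where b: "b = (B, w)" by force
  have AB: "A ** B = Finite_Cartesian_Product.mat 1" and v: "A *v w + v = 0"
    using assms by (simp_all add: a b aff_mult_def aff_id_def)
  have BA: "B ** A = Finite_Cartesian_Product.mat 1" using AB matrix_left_right_inverse by blast
  have mi: "matrix_inv A = B" by (rule matrix_inv_eq[OF AB])
  have "w = B *v (A *v w)" by (simp add: matrix_vector_mul_assoc BA)
  also have "A *v w = - v" using v by (simp add: eq_neg_iff_add_eq_0)
  finally have "- (B *v v) = w" by (simp add: mvneg)
  then show ?thesis by (simp add: a b aff_inv_def mi)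
qed

lemma coninv_group:
  assumes "aff_mult h (aff_conj h) = (aff_id :: 'n::finite aff)"
  shows "h \<in> aff_group"
proof -
  obtain A v where a: "h = (A, v)" by force
  have "A ** (\<chi> i j. cnj (vec_nth (vec_nth A i) j)) = Finite_Cartesian_Product.mat 1"
    using assms by (simp add: a aff_mult_def aff_conj_def aff_id_def)
  then have "invertible A" using invertible_right_inverse by blast
  then show ?thesis by (simp add: a aff_group_def)
qed

lemma tc:
  assumes k: "aff_mult k ki = (aff_id :: 'n::finite aff)" and x: "aff_mult x (aff_conj x) = aff_id"
  shows "coninvolution (aff_mult (aff_mult k x) (aff_conj ki))"
proof -
  have kik: "aff_mult ki k = aff_id" by (rule aff_inv_comm[OF k])
  have c: "aff_mult (aff_conj ki) (aff_conj k) = aff_id"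
    using kik by (metis aff_conj_mult aff_conj_id)
  let ?h = "aff_mult (aff_mult k x) (aff_conj ki)"
  have "aff_conj ?h = aff_mult (aff_mult (aff_conj k) (aff_conj x)) ki"
    by (simp add: aff_conj_mult)
  then have "aff_mult ?h (aff_conj ?h) = aff_mult k (aff_mult x (aff_mult (aff_mult (aff_conj ki) (aff_conj k)) (aff_mult (aff_conj x) ki)))"
    by (simp add: aff_assoc)
  also have "\<dots> = aff_id" using c x k by (simp flip: aff_assoc)
  finally have h: "aff_mult ?h (aff_conj ?h) = aff_id" .
  show ?thesis unfolding coninvolution_def using h coninv_group[OF h] by simp
qed

lemma src_from_decomp:
  assumes h1: "coninvolution h1" and h2: "coninvolution h2" and g: "g = aff_mult h1 (h2 :: 'n::finite aff)"
  shows "strongly_c_reversible g"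
proof -
  have e1: "aff_mult h1 (aff_conj h1) = aff_id" using h1 by (simp add: coninvolution_def)
  have e2: "aff_mult h2 (aff_conj h2) = aff_id" using h2 by (simp add: coninvolution_def)
  have e1': "aff_mult (aff_conj h1) h1 = aff_id" by (rule aff_inv_comm[OF e1])
  have e2': "aff_mult (aff_conj h2) h2 = aff_id" by (rule aff_inv_comm[OF e2])
  let ?h = "aff_conj h1"
  have ch: "coninvolution ?h"
    unfolding coninvolution_def using e1' coninv_group[of ?h] by simp
  have i1: "aff_inv ?h = h1" by (rule aff_inv_eq[OF e1'])
  have "aff_mult (aff_mult (aff_conj h1) (aff_conj h2)) (aff_mult h2 h1) = aff_id"
    using e1' e2' by (simp add: aff_assoc flip: aff_assoc[of "aff_conj h2" h2 h1])
  then have i2: "aff_inv (aff_conj g) = aff_mult h2 h1"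
    using g by (simp add: aff_conj_mult aff_inv_eq)
  have "aff_mult (aff_mult ?h g) (aff_inv ?h) = aff_mult h2 h1"
    using g i1 e1' by (simp flip: aff_assoc)
  then show ?thesis unfolding strongly_c_reversible_def using ch i2 by metis
qed

lemma vec_final:
  fixes U P Q K K' J :: "complex^'n::finite^'n" and v a :: "complex^'n" and x1 x2 :: "'n aff"
  assumes PQ: "P ** Q = Finite_Cartesian_Product.mat 1" and QP: "Q ** P = Finite_Cartesian_Product.mat 1"
    and KK: "K ** K' = Finite_Cartesian_Product.mat 1" and KK': "K' ** K = Finite_Cartesian_Product.mat 1"
    and KJK: "K' ** J ** K = J" and U: "U = P ** J ** Q"
    and x1: "aff_mult x1 (aff_conj x1) = aff_id" and x2: "aff_mult x2 (aff_conj x2) = aff_id"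
    and x12: "aff_mult x1 x2 = (J, K' *v (J *v a + Q *v v - a))"
  shows "\<exists>h1 h2. coninvolution h1 \<and> coninvolution h2 \<and> (U, v) = aff_mult h1 h2"
proof -
  define k :: "'n aff" where "k = (P ** K, P *v a)"
  define ki :: "'n aff" where "ki = (K' ** Q, - ((K' ** Q) *v (P *v a)))"
  have KJK2: "K ** J ** K' = J"
  proof -
    have "K ** J ** K' = K ** (K' ** J ** K) ** K'" using KJK by simp
    also have "\<dots> = (K ** K') ** J ** (K ** K')" by (simp add: matrix_mul_assoc)
    also have "\<dots> = J" by (simp add: KK)
    finally show ?thesis .
  qed
  have M1: "P ** K ** (K' ** Q) = Finite_Cartesian_Product.mat 1"
  proof -
    have "P ** K ** (K' ** Q) = P ** (K ** K') ** Q" by (simp add: matrix_mul_assoc)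
    then show ?thesis by (simp add: KK PQ)
  qed
  have M1': "P ** K ** (K' ** Q ** P) = P"
  proof -
    have "P ** K ** (K' ** Q ** P) = (P ** K ** (K' ** Q)) ** P" by (simp add: matrix_mul_assoc)
    then show ?thesis by (simp add: M1)
  qed
  have kki: "aff_mult k ki = aff_id"
    unfolding k_def ki_def aff_mult_simp aff_id_def
    by (simp add: mvneg matrix_vector_mul_assoc M1 M1')
  have M2: "P ** K ** J ** (K' ** Q) = U"
  proof -
    have "P ** K ** J ** (K' ** Q) = P ** (K ** J ** K') ** Q" by (simp add: matrix_mul_assoc)
    then show ?thesis by (simp add: KJK2 U)
  qed
  have UP: "U ** P = P ** J" using U QP by (simp flip: matrix_mul_assoc)
  have PKK: "P ** K ** K' = P" using KK by (simp flip: matrix_mul_assoc)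
  have M3: "P ** K ** J ** (K' ** Q ** P) = P ** J"
  proof -
    have "P ** K ** J ** (K' ** Q ** P) = (P ** K ** J ** (K' ** Q)) ** P" by (simp add: matrix_mul_assoc)
    then show ?thesis by (simp add: M2 UP)
  qed
  have v1: "(P ** K ** J) *v (- ((K' ** Q) *v (P *v a))) = - ((P ** J) *v a)"
    by (simp add: mvneg matrix_vector_mul_assoc M3)
  have M4: "P ** K ** (K' ** J) = P ** J"
  proof -
    have "P ** K ** (K' ** J) = (P ** K ** K') ** J" by (simp add: matrix_mul_assoc)
    then show ?thesis by (simp add: PKK)
  qed
  have v2: "(P ** K) *v (K' *v (J *v a + Q *v v - a)) = (P ** J) *v a + v - P *v a"
    by (simp add: matrix_vector_mul_assoc PKK matrix_vector_right_distrib matrix_vector_mult_diff_distrib PQ M1 M4)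
  have g: "aff_mult (aff_mult k (J, K' *v (J *v a + Q *v v - a))) ki = (U, v)"
    unfolding k_def ki_def aff_mult_simp
    by (simp add: M2 v1 v2)
  define h1 where "h1 = aff_mult (aff_mult k x1) (aff_conj ki)"
  define h2 where "h2 = aff_mult (aff_mult (aff_conj k) x2) (aff_conj (aff_conj ki))"
  have c1: "coninvolution h1" unfolding h1_def by (rule tc[OF kki x1])
  have ckki: "aff_mult (aff_conj k) (aff_conj ki) = aff_id" using kki by (metis aff_conj_mult aff_conj_id)
  have c2: "coninvolution h2" unfolding h2_def by (rule tc[OF ckki x2])
  have kik: "aff_mult (aff_conj ki) (aff_conj k) = aff_id"
    using aff_inv_comm[OF kki] by (metis aff_conj_mult aff_conj_id)
  have "aff_mult h1 h2 = aff_mult k (aff_mult x1 (aff_mult (aff_mult (aff_conj ki) (aff_conj k)) (aff_mult x2 ki)))"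
    unfolding h1_def h2_def by (simp add: aff_assoc)
  also have "\<dots> = aff_mult (aff_mult k (aff_mult x1 x2)) ki" by (simp add: kik aff_assoc)
  also have "\<dots> = (U, v)" using g x12 by simp
  finally show ?thesis using c1 c2 by metis
qed

lemma aff_conj_fm: "X \<in> carrier_mat CARD('n::finite) CARD('n) \<Longrightarrow> y \<in> carrier_vec CARD('n) \<Longrightarrow>
   aff_conj (fm X :: complex^'n^'n, fv y :: complex^'n) = (fm (map_mat cnj X), fv (map_vec cnj y))"
  by (simp add: aff_conj_def fm_cnj fv_cnj)

theorem proposition3p6:
  fixes U :: "complex^'n::finite^'n" and v :: "complex^'n"
  assumes "invertible U" and "unipotent U"
  shows "strongly_c_reversible (U, v) \<and>
         (\<exists>h1 h2. coninvolution h1 \<and> coninvolution h2 \<and> (U, v) = aff_mult h1 h2)"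
proof -
  let ?N = "CARD('n)"
  have A: "tm U \<in> carrier_mat ?N ?N" by (rule tm_carrier)
  have ev: "a = 1" if y: "y \<in> carrier_vec ?N" "y \<noteq> 0\<^sub>v ?N" "tm U *\<^sub>v y = a \<cdot>\<^sub>v y" for a y
  proof -
    have "(fv (tm U *\<^sub>v y) :: complex^'n) = fm (tm U) *v fv y" by (rule fv_mult[OF A y(1)])
    then have "U *v (fv y :: complex^'n) = a *s fv y" using y(3) fv_smult[OF y(1), of a] by (simp add: fm_tm)
    moreover have "(fv y :: complex^'n) \<noteq> 0"
    proof
      assume "(fv y :: complex^'n) = 0"
      then have "tv (fv y :: complex^'n) = tv (fv (0\<^sub>v ?N) :: complex^'n)" by (simp add: fv_zero)
      moreover have "tv (fv (0\<^sub>v ?N) :: complex^'n) = 0\<^sub>v ?N" by (rule tv_fv) simp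
      ultimately show False using y tv_fv[OF y(1)] by simp
    qed
    ultimately show ?thesis using assms(2) unfolding unipotent_def by blast
  qed
  obtain P Q J where PQJ: "P \<in> carrier_mat ?N ?N" "Q \<in> carrier_mat ?N ?N" "J \<in> carrier_mat ?N ?N"
    "P * Q = 1\<^sub>m ?N" "Q * P = 1\<^sub>m ?N" "tm U = P * J * Q" "\<forall>c \<in> carrier_vec ?N. red ?N J c"
  proof -
    have ev': "\<forall>a y. y \<in> carrier_vec ?N \<and> y \<noteq> 0\<^sub>v ?N \<and> tm U *\<^sub>v y = a \<cdot>\<^sub>v y \<longrightarrow> a = 1"
      using ev by blast
    show ?thesis using mat_main[OF A ev'] that by blast
  qed
  define c where "c = Q *\<^sub>v tv v"
  have cc: "c \<in> carrier_vec ?N" using PQJ(2) by (simp add: c_def tv_carrier)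
  obtain K K' a where KK: "K \<in> carrier_mat ?N ?N" "K' \<in> carrier_mat ?N ?N" "a \<in> carrier_vec ?N"
     "K * K' = 1\<^sub>m ?N" "K' * K = 1\<^sub>m ?N" "K' * J * K = J" "good ?N J (K' *\<^sub>v (J *\<^sub>v a + c - a))"
    using PQJ(7) cc unfolding red_def by blast
  obtain X1 X2 y1 y2 where X: "X1 \<in> carrier_mat ?N ?N" "X2 \<in> carrier_mat ?N ?N"
      "y1 \<in> carrier_vec ?N" "y2 \<in> carrier_vec ?N" "X1 * X1 = 1\<^sub>m ?N" "X2 * X2 = 1\<^sub>m ?N"
      "X1 *\<^sub>v y1 + y1 = 0\<^sub>v ?N" "X2 *\<^sub>v y2 + y2 = 0\<^sub>v ?N" "X1 * X2 = J"
      "X1 *\<^sub>v y2 + y1 = K' *\<^sub>v (J *\<^sub>v a + c - a)"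
      "map_mat cnj X1 = X1" "map_mat cnj X2 = X2" "map_vec cnj y1 = y1" "map_vec cnj y2 = y2"
    using KK(7) unfolding good_def by blast
  let ?P = "fm P :: complex^'n^'n" and ?Q = "fm Q :: complex^'n^'n" and ?J = "fm J :: complex^'n^'n"
  let ?K = "fm K :: complex^'n^'n" and ?K' = "fm K' :: complex^'n^'n" and ?a = "fv a :: complex^'n"
  have m1: "?P ** ?Q = Finite_Cartesian_Product.mat 1" using PQJ by (simp flip: fm_mult add: fm_one)
  have m2: "?Q ** ?P = Finite_Cartesian_Product.mat 1" using PQJ by (simp flip: fm_mult add: fm_one)
  have m3: "?K ** ?K' = Finite_Cartesian_Product.mat 1" using KK by (simp flip: fm_mult add: fm_one)
  have m4: "?K' ** ?K = Finite_Cartesian_Product.mat 1" using KK by (simp flip: fm_mult add: fm_one)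
  have K'J: "K' * J \<in> carrier_mat ?N ?N" using KK PQJ by (auto intro: mult_carrier_mat)
  have PJ: "P * J \<in> carrier_mat ?N ?N" using PQJ by (auto intro: mult_carrier_mat)
  have m5: "?K' ** ?J ** ?K = ?J" using KK PQJ K'J by (simp flip: fm_mult)
  have m6: "U = ?P ** ?J ** ?Q"
  proof -
    have "U = fm (tm U)" by (simp add: fm_tm)
    also have "\<dots> = fm (P * J * Q)" using PQJ(6) by simp
    also have "\<dots> = ?P ** ?J ** ?Q" using PQJ PJ by (simp add: fm_mult matrix_mul_assoc)
    finally show ?thesis .
  qed
  define x1 :: "'n aff" where "x1 = (fm X1, fv y1)"
  define x2 :: "'n aff" where "x2 = (fm X2, fv y2)"
  have Xc: "X1 *\<^sub>v y1 \<in> carrier_vec ?N" "X2 *\<^sub>v y2 \<in> carrier_vec ?N" "X1 *\<^sub>v y2 \<in> carrier_vec ?N"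
    using X by auto
  have cx1: "aff_mult x1 (aff_conj x1) = aff_id"
    unfolding x1_def using X Xc
    by (simp add: aff_conj_fm aff_mult_simp aff_id_def fm_one fv_zero flip: fm_mult fv_mult fv_add)
  have cx2: "aff_mult x2 (aff_conj x2) = aff_id"
    unfolding x2_def using X Xc
    by (simp add: aff_conj_fm aff_mult_simp aff_id_def fm_one fv_zero flip: fm_mult fv_mult fv_add)
  have fvc: "(fv (K' *\<^sub>v (J *\<^sub>v a + c - a)) :: complex^'n) = ?K' *v (?J *v ?a + ?Q *v v - ?a)"
  proof -
    have c1: "J *\<^sub>v a \<in> carrier_vec ?N" using PQJ KK by auto
    have c2: "J *\<^sub>v a + c \<in> carrier_vec ?N" using c1 cc by auto
    have "(fv c :: complex^'n) = ?Q *v v" unfolding c_def using PQJ by (simp add: fv_mult tv_carrier fv_tv)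
    then show ?thesis using c1 c2 cc KK PQJ
      by (simp add: fv_mult fv_add fv_minus)
  qed
  have x12: "aff_mult x1 x2 = (?J, ?K' *v (?J *v ?a + ?Q *v v - ?a))"
    unfolding x1_def x2_def aff_mult_simp using X Xc
    by (simp add: fvc flip: fm_mult fv_mult fv_add)
  obtain h1 h2 where h: "coninvolution h1" "coninvolution h2" "(U, v) = aff_mult h1 h2"
    using vec_final[OF m1 m2 m3 m4 m5 m6 cx1 cx2 x12] by blast
  then show ?thesis using src_from_decomp[OF h(1,2) h(3)] by blast
qed

end
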